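(* Let $\Gamma$ be a distance-regular graph with diameter $D\ge3$ and $a_1\ne0$, and let $\sigma_0,\dots,\sigma_D$ be a nontrivial pseudo cosine sequence. Then there exists at most one nontrivial pseudo cosine sequence $\rho_0,\dots,\rho_D$ such that $\sigma_0,\dots,\sigma_D$ and $\rho_0,\dots,\rho_D$ form a tight pair. If such $\rho_0,\dots,\rho_D$ exists, then the corresponding auxiliary parameter is unique.
   Context: $\Gamma$ is a finite connected undirected graph without loops or multiple edges, distance-regular with diameter $D$, intersection numbers $a_i,b_i,c_i$ ($c_0=0$, $b_D=0$), valency $k$, $c_i+a_i+b_i=k$. For $\theta\in\mathbb{R}$ the pseudo cosine sequence for $\theta$ is the sequence of reals $\sigma_0,\dots,\sigma_D$ with $\sigma_0=1$ and $c_i\sigma_{i-1}+a_i\sigma_i+b_i\sigma_{i+1}=\theta\sigma_i$ for $0\le i\le D-1$; nontrivial means $\sigma_1\ne1$. Pseudo cosine sequences $\sigma_i$, $\rho_i$ form a tight pair if $(\sigma_i\rho_i)_{i=0}^D$ is a pseudo cosine sequence. For a tight pair of nontrivial pseudo cosine sequences, an auxiliary parameter is a real $\varepsilon$ with $\sigma_i\rho_i-\sigma_{i-1}\rho_{i-1}=\varepsilon(\sigma_{i-1}\rho_i-\sigma_i\rho_{i-1})$ for $1\le i\le D$. *)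

theory Defs
  imports Complex_Main
begin

definition simple_graph :: "'a set \<Rightarrow> ('a \<Rightarrow> 'a \<Rightarrow> bool) \<Rightarrow> bool" where
  "simple_graph V E \<longleftrightarrow> finite V \<and> V \<noteq> {} \<and>
     (\<forall>x y. E x y \<longrightarrow> x \<in> V \<and> y \<in> V) \<and>
     (\<forall>x y. E x y \<longrightarrow> E y x) \<and> (\<forall>x. \<not> E x x)"

fun walk_len :: "'a set \<Rightarrow> ('a \<Rightarrow> 'a \<Rightarrow> bool) \<Rightarrow> nat \<Rightarrow> 'a \<Rightarrow> 'a \<Rightarrow> bool" where
  "walk_len V E 0 x y \<longleftrightarrow> x = y"
| "walk_len V E (Suc n) x y \<longleftrightarrow> (\<exists>z\<in>V. E x z \<and> walk_len V E n z y)"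

definition connected_graph :: "'a set \<Rightarrow> ('a \<Rightarrow> 'a \<Rightarrow> bool) \<Rightarrow> bool" where
  "connected_graph V E \<longleftrightarrow> (\<forall>x\<in>V. \<forall>y\<in>V. \<exists>n. walk_len V E n x y)"

definition gdist :: "'a set \<Rightarrow> ('a \<Rightarrow> 'a \<Rightarrow> bool) \<Rightarrow> 'a \<Rightarrow> 'a \<Rightarrow> nat" where
  "gdist V E x y = (LEAST n. walk_len V E n x y)"

definition diameter :: "'a set \<Rightarrow> ('a \<Rightarrow> 'a \<Rightarrow> bool) \<Rightarrow> nat" where
  "diameter V E = Max {gdist V E x y | x y. x \<in> V \<and> y \<in> V}"

definition distance_regular ::
  "'a set \<Rightarrow> ('a \<Rightarrow> 'a \<Rightarrow> bool) \<Rightarrow> nat \<Rightarrow> (nat \<Rightarrow> nat) \<Rightarrow> (nat \<Rightarrow> nat) \<Rightarrow> (nat \<Rightarrow> nat) \<Rightarrow> bool" where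
  "distance_regular V E D a b c \<longleftrightarrow>
     simple_graph V E \<and> connected_graph V E \<and> diameter V E = D \<and> c 0 = 0 \<and> b D = 0 \<and>
     (\<forall>x\<in>V. \<forall>y\<in>V. let i = gdist V E x y in
        (i \<ge> 1 \<longrightarrow> card {z\<in>V. E y z \<and> gdist V E x z = i - 1} = c i) \<and>
        card {z\<in>V. E y z \<and> gdist V E x z = i} = a i \<and>
        card {z\<in>V. E y z \<and> gdist V E x z = i + 1} = b i)"

text \<open>Pseudo cosine sequence for theta (indices 0..D; values outside are irrelevant).\<close>
definition pseudo_cosine_for ::
  "nat \<Rightarrow> (nat \<Rightarrow> nat) \<Rightarrow> (nat \<Rightarrow> nat) \<Rightarrow> (nat \<Rightarrow> nat) \<Rightarrow> real \<Rightarrow> (nat \<Rightarrow> real) \<Rightarrow> bool" where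
  "pseudo_cosine_for D a b c \<theta> \<sigma> \<longleftrightarrow> \<sigma> 0 = 1 \<and>
     (\<forall>i<D. (if i = 0 then 0 else real (c i) * \<sigma> (i - 1)) + real (a i) * \<sigma> i
              + real (b i) * \<sigma> (i + 1) = \<theta> * \<sigma> i)"

definition pseudo_cosine ::
  "nat \<Rightarrow> (nat \<Rightarrow> nat) \<Rightarrow> (nat \<Rightarrow> nat) \<Rightarrow> (nat \<Rightarrow> nat) \<Rightarrow> (nat \<Rightarrow> real) \<Rightarrow> bool" where
  "pseudo_cosine D a b c \<sigma> \<longleftrightarrow> (\<exists>\<theta>. pseudo_cosine_for D a b c \<theta> \<sigma>)"

definition nontrivial_pseudo_cosine ::
  "nat \<Rightarrow> (nat \<Rightarrow> nat) \<Rightarrow> (nat \<Rightarrow> nat) \<Rightarrow> (nat \<Rightarrow> nat) \<Rightarrow> (nat \<Rightarrow> real) \<Rightarrow> bool" where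
  "nontrivial_pseudo_cosine D a b c \<sigma> \<longleftrightarrow> pseudo_cosine D a b c \<sigma> \<and> \<sigma> 1 \<noteq> 1"

definition tight_pair ::
  "nat \<Rightarrow> (nat \<Rightarrow> nat) \<Rightarrow> (nat \<Rightarrow> nat) \<Rightarrow> (nat \<Rightarrow> nat) \<Rightarrow> (nat \<Rightarrow> real) \<Rightarrow> (nat \<Rightarrow> real) \<Rightarrow> bool" where
  "tight_pair D a b c \<sigma> \<rho> \<longleftrightarrow> pseudo_cosine D a b c \<sigma> \<and> pseudo_cosine D a b c \<rho> \<and>
     pseudo_cosine D a b c (\<lambda>i. \<sigma> i * \<rho> i)"

definition auxiliary_parameter ::
  "nat \<Rightarrow> (nat \<Rightarrow> real) \<Rightarrow> (nat \<Rightarrow> real) \<Rightarrow> real \<Rightarrow> bool" where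
  "auxiliary_parameter D \<sigma> \<rho> \<epsilon> \<longleftrightarrow>
     (\<forall>i. 1 \<le> i \<and> i \<le> D \<longrightarrow>
        \<sigma> i * \<rho> i - \<sigma> (i - 1) * \<rho> (i - 1) = \<epsilon> * (\<sigma> (i - 1) * \<rho> i - \<sigma> i * \<rho> (i - 1)))"

end

theory Submission
  imports Defs
begin

lemma alg_factor:
  fixes a1 b1 s r :: real
  shows "(((1+a1+b1)*s^2 - a1*s - 1)*((1+a1+b1)*r^2 - a1*r - 1) - b1*((1+a1+b1)*s^2*r^2 - a1*s*r - 1))
     = (r-1)*((1+a1+b1)*(s-1)*((1+a1)*s+1)*r - (b1 - (1+a1+b1)*s^2 + a1*s + 1))"
  by (simp add: algebra_simps power2_eq_square)

lemma alg_main: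
  fixes a1 b1 s r :: real
  assumes a1: "a1 \<ge> 1" and b1: "b1 > 0" and s: "s \<noteq> 1" and r: "r \<noteq> 1"
    and eq: "((1+a1+b1)*s^2 - a1*s - 1)*((1+a1+b1)*r^2 - a1*r - 1) = b1*((1+a1+b1)*s^2*r^2 - a1*s*r - 1)"
  shows "(1+a1+b1)*(s-1)*((1+a1)*s+1) \<noteq> 0"
    and "r = (b1 - (1+a1+b1)*s^2 + a1*s + 1) / ((1+a1+b1)*(s-1)*((1+a1)*s+1))"
    and "\<not> (r = -1 \<and> s = -1)"
proof -
  define A where "A = (1+a1+b1)*(s-1)*((1+a1)*s+1)"
  define C where "C = b1 - (1+a1+b1)*s^2 + a1*s + 1"
  have "(r-1)*(A*r - C) = 0" using eq alg_factor[of a1 b1 s r] unfolding A_def C_def by linarith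
  hence AC: "A*r = C" using r by simp
  show A0: "A \<noteq> 0"
  proof
    assume "A = 0"
    hence "(1+a1)*s+1 = 0" using s a1 b1 unfolding A_def by auto
    have "(1+a1)*C = b1*(1+a1+s) + ((1+a1)*s+1)*(-(1+a1+b1)*s + 1 + a1)" unfolding C_def by (simp add: algebra_simps power2_eq_square)
    hence "(1+a1)*C = b1*(1+a1+s)" using \<open>(1+a1)*s+1 = 0\<close> by simp
    also have "... = -a1*b1*(s-1) + b1*((1+a1)*s+1)" by (simp add: algebra_simps)
    also have "... = -a1*b1*(s-1)" using \<open>(1+a1)*s+1 = 0\<close> by simp
    finally have "(1+a1)*C = -a1*b1*(s-1)" .
    moreover have "C = 0" using AC \<open>A = 0\<close> by simp
    ultimately show False using a1 b1 s by simp
  qed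
  show "r = C / A" using AC A0 by (simp add: field_simps)
  show "\<not> (r = -1 \<and> s = -1)"
  proof
    assume "r = -1 \<and> s = -1"
    with AC have "-2*(1+a1+b1)*a1 = -2*a1" unfolding A_def C_def by (simp add: algebra_simps)
    hence "a1*(a1+b1) = 0" by (simp add: algebra_simps)
    thus False using a1 b1 by simp
  qed
qed


lemma walk_snoc:
  assumes "simple_graph V E"
  shows "walk_len V E (Suc n) x y \<longleftrightarrow> (\<exists>z. walk_len V E n x z \<and> E z y)"
proof (induction n arbitrary: x)
  case 0
  then show ?case using assms by (auto simp: simple_graph_def)
next
  case (Suc n)
  have "walk_len V E (Suc (Suc n)) x y \<longleftrightarrow> (\<exists>z\<in>V. E x z \<and> walk_len V E (Suc n) z y)" by simp
  also have "\<dots> \<longleftrightarrow> (\<exists>z\<in>V. E x z \<and> (\<exists>w. walk_len V E n z w \<and> E w y))" using Suc.IH by simp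
  also have "\<dots> \<longleftrightarrow> (\<exists>w. walk_len V E (Suc n) x w \<and> E w y)" by auto
  finally show ?case .
qed

lemma gd_walk:
  assumes "connected_graph V E" "x \<in> V" "y \<in> V"
  shows "walk_len V E (gdist V E x y) x y"
  using assms unfolding gdist_def connected_graph_def by (metis LeastI_ex)

lemma gd_le: "walk_len V E n x y \<Longrightarrow> gdist V E x y \<le> n"
  unfolding gdist_def by (rule Least_le)

lemma gd_self: "gdist V E x x = 0"
  using gd_le[of V E 0 x x] by simp

lemma gd_zero:
  assumes "connected_graph V E" "x \<in> V" "y \<in> V" "gdist V E x y = 0"
  shows "x = y"
  using gd_walk[OF assms(1-3)] assms(4) by simp

lemma gd_pred:
  assumes sg: "simple_graph V E" and cg: "connected_graph V E" and xy: "x \<in> V" "y \<in> V"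
    and d: "gdist V E x y = Suc j"
  shows "\<exists>z\<in>V. E z y \<and> gdist V E x z = j"
proof -
  have "walk_len V E (Suc j) x y" using gd_walk[OF cg xy] d by simp
  then obtain z where wz: "walk_len V E j x z" and ez: "E z y" using walk_snoc[OF sg] by blast
  have zV: "z \<in> V" using sg ez by (auto simp: simple_graph_def)
  have le: "gdist V E x z \<le> j" using gd_le[OF wz] .
  have "\<not> gdist V E x z < j"
  proof
    assume lt: "gdist V E x z < j"
    have "walk_len V E (gdist V E x z) x z" using gd_walk[OF cg xy(1) zV] .
    hence "walk_len V E (Suc (gdist V E x z)) x y" using walk_snoc[OF sg] ez by blast
    hence "gdist V E x y \<le> Suc (gdist V E x z)" by (rule gd_le)
    thus False using lt d by simp
  qed
  with le zV ez show ?thesis by auto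
qed

lemma gd_reach:
  assumes sg: "simple_graph V E" and cg: "connected_graph V E" and x: "x \<in> V"
  shows "y \<in> V \<Longrightarrow> gdist V E x y = n \<Longrightarrow> j \<le> n \<Longrightarrow> \<exists>z\<in>V. gdist V E x z = j"
proof (induction n arbitrary: y)
  case 0
  then show ?case by auto
next
  case (Suc n)
  show ?case
  proof (cases "j = Suc n")
    case True
    then show ?thesis using Suc.prems by auto
  next
    case False
    obtain w where "w \<in> V" "gdist V E x w = n" using gd_pred[OF sg cg x Suc.prems(1,2)] by blast
    then show ?thesis using Suc.IH False Suc.prems(3) by simp
  qed
qed

lemma DR_inst:
  assumes "distance_regular V E D a b c" "x \<in> V" "y \<in> V" "gdist V E x y = i"
  shows "i \<ge> 1 \<Longrightarrow> card {z\<in>V. E y z \<and> gdist V E x z = i - 1} = c i"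
    and "card {z\<in>V. E y z \<and> gdist V E x z = i} = a i"
    and "card {z\<in>V. E y z \<and> gdist V E x z = i + 1} = b i"
  using assms unfolding distance_regular_def Let_def by auto

lemma graph_facts:
  assumes dr: "distance_regular V E D a b c" and D2: "D \<ge> 2"
  shows "a 0 = 0" "c 1 = 1" "b 0 = 1 + a 1 + b 1" "\<forall>j<D. b j > 0"
proof -
  have sg: "simple_graph V E" and cg: "connected_graph V E" and diam: "diameter V E = D"
    using dr unfolding distance_regular_def by auto
  have fin: "finite V" and ne: "V \<noteq> {}" and EV: "\<And>x y. E x y \<Longrightarrow> x \<in> V \<and> y \<in> V"
    and sym: "\<And>x y. E x y \<Longrightarrow> E y x" and irr: "\<And>x. \<not> E x x"
    using sg unfolding simple_graph_def by auto
  define S where "S = {gdist V E x y | x y. x \<in> V \<and> y \<in> V}"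
  have "S = (\<lambda>(x,y). gdist V E x y) ` (V \<times> V)" unfolding S_def by auto
  hence finS: "finite S" using fin by simp
  have neS: "S \<noteq> {}" using ne unfolding S_def by auto
  have "D \<in> S" using Max_in[OF finS neS] diam unfolding diameter_def S_def by simp
  then obtain x0 y0 where x0: "x0 \<in> V" and y0: "y0 \<in> V" and dxy: "gdist V E x0 y0 = D"
    unfolding S_def by auto
  show "\<forall>j<D. b j > 0"
  proof (intro allI impI)
    fix j assume j: "j < D"
    obtain z where zV: "z \<in> V" and dz: "gdist V E x0 z = Suc j"
      using gd_reach[OF sg cg x0 y0 dxy, of "Suc j"] j by auto
    obtain w where wV: "w \<in> V" and ew: "E w z" and dw: "gdist V E x0 w = j"
      using gd_pred[OF sg cg x0 zV dz] by blast
    have cd: "card {u\<in>V. E w u \<and> gdist V E x0 u = j + 1} = b j"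
      using DR_inst(3)[OF dr x0 wV dw] .
    have "z \<in> {u\<in>V. E w u \<and> gdist V E x0 u = j + 1}" using zV ew dz by simp
    moreover have "finite {u\<in>V. E w u \<and> gdist V E x0 u = j + 1}" using fin by simp
    ultimately have "card {u\<in>V. E w u \<and> gdist V E x0 u = j + 1} > 0"
      using card_gt_0_iff by blast
    thus "b j > 0" using cd by simp
  qed
  have z0: "\<And>v z. v \<in> V \<Longrightarrow> z \<in> V \<Longrightarrow> gdist V E v z = 0 \<Longrightarrow> z = v"
    using gd_zero[OF cg] by metis
  have e: "{z\<in>V. E x0 z \<and> gdist V E x0 z = 0} = {}" using z0[OF x0] irr by auto
  show "a 0 = 0" using DR_inst(2)[OF dr x0 x0 gd_self] unfolding e by simp
  have deg: "b 0 = card {z\<in>V. E v z}" if v: "v \<in> V" for v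
  proof -
    have "{z\<in>V. E v z \<and> gdist V E v z = 0 + 1} = {z\<in>V. E v z}"
    proof (intro set_eqI iffI)
      fix z assume z: "z \<in> {z\<in>V. E v z}"
      have "walk_len V E 1 v z" using z by auto
      hence "gdist V E v z \<le> 1" by (rule gd_le)
      moreover have "gdist V E v z \<noteq> 0" using z0[OF v] z irr by blast
      ultimately show "z \<in> {z\<in>V. E v z \<and> gdist V E v z = 0 + 1}" using z by auto
    qed auto
    thus ?thesis using DR_inst(3)[OF dr v v gd_self] by simp
  qed
  obtain y1 where y1: "y1 \<in> V" and d1: "gdist V E x0 y1 = 1"
    using gd_reach[OF sg cg x0 y0 dxy, of 1] D2 by auto
  have w1: "walk_len V E 1 x0 y1" using gd_walk[OF cg x0 y1] d1 by simp
  hence e1: "E x0 y1" by auto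
  have "{z\<in>V. E y1 z \<and> gdist V E x0 z = 1 - 1} = {x0}"
    using z0[OF x0] x0 sym[OF e1] gd_self[of V E x0] by auto
  hence c1: "c 1 = 1" using DR_inst(1)[OF dr x0 y1 d1] by simp
  thus "c 1 = 1" .
  define S0 where "S0 = {z\<in>V. E y1 z \<and> gdist V E x0 z = 0}"
  define S1 where "S1 = {z\<in>V. E y1 z \<and> gdist V E x0 z = 1}"
  define S2 where "S2 = {z\<in>V. E y1 z \<and> gdist V E x0 z = 2}"
  have cS0: "card S0 = 1" using DR_inst(1)[OF dr x0 y1 d1] c1 unfolding S0_def by simp
  have cS1: "card S1 = a 1" using DR_inst(2)[OF dr x0 y1 d1] unfolding S1_def by simp
  have cS2: "card S2 = b 1" using DR_inst(3)[OF dr x0 y1 d1] unfolding S2_def by (simp add: numeral_2_eq_2)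
  have "{z\<in>V. E y1 z} = S0 \<union> S1 \<union> S2"
  proof (intro set_eqI iffI)
    fix z assume z: "z \<in> {z\<in>V. E y1 z}"
    have "walk_len V E (Suc 1) x0 z" using walk_snoc[OF sg] w1 z by blast
    hence "gdist V E x0 z \<le> 2" using gd_le by fastforce
    hence "gdist V E x0 z = 0 \<or> gdist V E x0 z = 1 \<or> gdist V E x0 z = 2" by auto
    thus "z \<in> S0 \<union> S1 \<union> S2" using z unfolding S0_def S1_def S2_def by auto
  qed (auto simp: S0_def S1_def S2_def)
  moreover have "card (S0 \<union> S1 \<union> S2) = card S0 + card S1 + card S2"
    by (subst card_Un_disjoint, (auto simp: S0_def S1_def S2_def fin)[3])
       (subst card_Un_disjoint, (auto simp: S0_def S1_def S2_def fin))
  ultimately show "b 0 = 1 + a 1 + b 1" using deg[OF y1] cS0 cS1 cS2 by simp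
qed

lemma det_seq:
  assumes bpos: "\<forall>j<D. b j > 0" and D1: "D \<ge> 1"
    and p1: "pseudo_cosine_for D a b c \<theta> \<rho>" and p2: "pseudo_cosine_for D a b c \<theta> \<rho>'"
    and e1: "\<rho> 1 = \<rho>' 1"
  shows "\<forall>i\<le>D. \<rho> i = \<rho>' i"
proof -
  have r0: "\<rho> 0 = 1" "\<rho>' 0 = 1" using p1 p2 unfolding pseudo_cosine_for_def by auto
  have step: "n + 1 \<le> D \<Longrightarrow> \<rho> n = \<rho>' n \<and> \<rho> (Suc n) = \<rho>' (Suc n)" for n
  proof (induction n)
    case 0
    then show ?case using r0 e1 by simp
  next
    case (Suc n)
    hence IH: "\<rho> n = \<rho>' n" "\<rho> (Suc n) = \<rho>' (Suc n)" by auto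
    have lt: "Suc n < D" using Suc.prems by simp
    have q1: "real (c (Suc n)) * \<rho> n + real (a (Suc n)) * \<rho> (Suc n) + real (b (Suc n)) * \<rho> (Suc (Suc n)) = \<theta> * \<rho> (Suc n)"
      using p1 lt unfolding pseudo_cosine_for_def by fastforce
    have q2: "real (c (Suc n)) * \<rho>' n + real (a (Suc n)) * \<rho>' (Suc n) + real (b (Suc n)) * \<rho>' (Suc (Suc n)) = \<theta> * \<rho>' (Suc n)"
      using p2 lt unfolding pseudo_cosine_for_def by fastforce
    have "real (b (Suc n)) * \<rho> (Suc (Suc n)) = real (b (Suc n)) * \<rho>' (Suc (Suc n))"
      using q1 q2 unfolding IH by linarith
    moreover have "real (b (Suc n)) \<noteq> 0" using bpos lt by simp
    ultimately have "\<rho> (Suc (Suc n)) = \<rho>' (Suc (Suc n))" by simp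
    thus ?case using IH by simp
  qed
  show ?thesis
  proof (intro allI impI)
    fix i assume "i \<le> D"
    thus "\<rho> i = \<rho>' i"
      by (cases i) (use r0 step in auto)
  qed
qed

theorem corollary12p2:
  fixes V :: "'a set" and E :: "'a \<Rightarrow> 'a \<Rightarrow> bool" and D :: nat
    and a b c :: "nat \<Rightarrow> nat" and \<sigma> :: "nat \<Rightarrow> real"
  assumes "distance_regular V E D a b c"
    and "D \<ge> 3"
    and "a 1 \<noteq> 0"
    and "nontrivial_pseudo_cosine D a b c \<sigma>"
  shows "(\<forall>\<rho> \<rho>'. nontrivial_pseudo_cosine D a b c \<rho> \<and> tight_pair D a b c \<sigma> \<rho> \<and>
                  nontrivial_pseudo_cosine D a b c \<rho>' \<and> tight_pair D a b c \<sigma> \<rho>'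
                  \<longrightarrow> (\<forall>i\<le>D. \<rho> i = \<rho>' i))
       \<and> (\<forall>\<rho>. nontrivial_pseudo_cosine D a b c \<rho> \<and> tight_pair D a b c \<sigma> \<rho> \<longrightarrow>
              (\<forall>\<epsilon> \<epsilon>'. auxiliary_parameter D \<sigma> \<rho> \<epsilon> \<and> auxiliary_parameter D \<sigma> \<rho> \<epsilon>'
                        \<longrightarrow> \<epsilon> = \<epsilon>'))"

proof -
  note gf = graph_facts[OF assms(1)] 
  have D2: "D \<ge> 2" using assms(2) by simp
  have a0: "a 0 = 0" and c1: "c 1 = 1" and k: "b 0 = 1 + a 1 + b 1" and bpos: "\<forall>j<D. b j > 0"
    using gf[OF D2] by auto
  have a1: "real (a 1) \<ge> 1" using assms(3) by simp
  have b1: "real (b 1) > 0" using bpos D2 by simp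
  obtain \<theta> where ps: "pseudo_cosine_for D a b c \<theta> \<sigma>" and s1: "\<sigma> 1 \<noteq> 1"
    using assms(4) unfolding nontrivial_pseudo_cosine_def pseudo_cosine_def by auto
  have basic: "f 0 = 1 \<and> \<theta>' = real (b 0) * f 1 \<and> real (b 1) * f 2 = real (b 0) * f 1 ^ 2 - real (a 1) * f 1 - 1"
    if "pseudo_cosine_for D a b c \<theta>' f" for \<theta>' f
  proof -
    have f0: "f 0 = 1" using that unfolding pseudo_cosine_for_def by simp
    have e0: "real (a 0) * f 0 + real (b 0) * f 1 = \<theta>' * f 0"
      using that D2 unfolding pseudo_cosine_for_def by fastforce
    have e1: "real (c 1) * f 0 + real (a 1) * f 1 + real (b 1) * f 2 = \<theta>' * f 1"
      using spec[OF conjunct2[OF that[unfolded pseudo_cosine_for_def]], of 1] D2 by (simp add: numeral_2_eq_2)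
    have th: "\<theta>' = real (b 0) * f 1" using e0 f0 a0 by simp
    show ?thesis using f0 th e1 c1 by (simp add: power2_eq_square algebra_simps)
  qed
  define kk where "kk = real (a 1) + real (b 1)"
  have key: "\<rho> 1 \<noteq> 1 \<and> \<rho> 1 = (real (b 1) - (1 + real (a 1) + real (b 1)) * (\<sigma> 1)\<^sup>2 + real (a 1) * \<sigma> 1 + 1) /
               ((1 + real (a 1) + real (b 1)) * (\<sigma> 1 - 1) * ((1 + real (a 1)) * \<sigma> 1 + 1))
         \<and> \<not> (\<rho> 1 = -1 \<and> \<sigma> 1 = -1)
         \<and> (\<exists>\<theta>'. pseudo_cosine_for D a b c \<theta>' \<rho> \<and> \<theta>' = real (b 0) * \<rho> 1)"
    if KH: "nontrivial_pseudo_cosine D a b c \<rho>" "tight_pair D a b c \<sigma> \<rho>" for \<rho>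
  proof -
    obtain \<theta>' where pr: "pseudo_cosine_for D a b c \<theta>' \<rho>" and r1: "\<rho> 1 \<noteq> 1"
      using KH(1)[unfolded nontrivial_pseudo_cosine_def pseudo_cosine_def] by blast
    obtain \<theta>'' where pp: "pseudo_cosine_for D a b c \<theta>'' (\<lambda>i. \<sigma> i * \<rho> i)"
      using KH(2) unfolding tight_pair_def pseudo_cosine_def by auto
    note B1 = basic[OF ps] and B2 = basic[OF pr] and B3 = basic[OF pp]
    define s where "s = \<sigma> 1"
    define r where "r = \<rho> 1"
    have X: "real (b 1) * \<sigma> 2 = (1 + real (a 1) + real (b 1)) * s^2 - real (a 1) * s - 1"
      using B1 k unfolding s_def by simp
    have Y: "real (b 1) * \<rho> 2 = (1 + real (a 1) + real (b 1)) * r^2 - real (a 1) * r - 1"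
      using B2 k unfolding r_def by simp
    have Z: "real (b 1) * (\<sigma> 2 * \<rho> 2) = (1 + real (a 1) + real (b 1)) * s^2 * r^2 - real (a 1) * s * r - 1"
      using B3 k unfolding r_def s_def by (simp add: power_mult_distrib)
    have eq: "((1 + real (a 1) + real (b 1)) * s^2 - real (a 1) * s - 1) * ((1 + real (a 1) + real (b 1)) * r^2 - real (a 1) * r - 1)
       = real (b 1) * ((1 + real (a 1) + real (b 1)) * s^2 * r^2 - real (a 1) * s * r - 1)"
    proof -
      have "((1 + real (a 1) + real (b 1)) * s^2 - real (a 1) * s - 1) * ((1 + real (a 1) + real (b 1)) * r^2 - real (a 1) * r - 1)
          = (real (b 1) * \<sigma> 2) * (real (b 1) * \<rho> 2)" by (simp only: X Y)
      also have "\<dots> = real (b 1) * (real (b 1) * (\<sigma> 2 * \<rho> 2))" by (simp add: algebra_simps)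
      also have "\<dots> = real (b 1) * ((1 + real (a 1) + real (b 1)) * s^2 * r^2 - real (a 1) * s * r - 1)" by (simp only: Z)
      finally show ?thesis .
    qed
    note AL = alg_main[OF a1 b1 s1[folded s_def] r1[folded r_def] eq]
    show ?thesis using AL pr B2 unfolding r_def s_def using r1 by auto
  qed
  show ?thesis
  proof (intro conjI allI impI)
    fix \<rho> \<rho>' assume H: "nontrivial_pseudo_cosine D a b c \<rho> \<and> tight_pair D a b c \<sigma> \<rho> \<and>
                  nontrivial_pseudo_cosine D a b c \<rho>' \<and> tight_pair D a b c \<sigma> \<rho>'"
    have K1: "\<rho> 1 = \<rho>' 1" using key[of \<rho>] key[of \<rho>'] H by metis
    obtain t1 where P1: "pseudo_cosine_for D a b c t1 \<rho>" "t1 = real (b 0) * \<rho> 1" using key[of \<rho>] H by blast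
    obtain t2 where P2: "pseudo_cosine_for D a b c t2 \<rho>'" "t2 = real (b 0) * \<rho>' 1" using key[of \<rho>'] H by blast
    have "t1 = t2" using P1 P2 K1 by simp
    hence all: "\<forall>i\<le>D. \<rho> i = \<rho>' i" using det_seq[OF bpos _ P1(1), of \<rho>'] P2(1) K1 D2 by simp
    fix i assume "i \<le> D"
    thus "\<rho> i = \<rho>' i" using all by simp
  next
    fix \<rho> \<epsilon> \<epsilon>' assume H: "nontrivial_pseudo_cosine D a b c \<rho> \<and> tight_pair D a b c \<sigma> \<rho>"
      and A: "auxiliary_parameter D \<sigma> \<rho> \<epsilon> \<and> auxiliary_parameter D \<sigma> \<rho> \<epsilon>'"
    have s0: "\<sigma> 0 = 1" using ps unfolding pseudo_cosine_for_def by simp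
    obtain t1 where P1: "pseudo_cosine_for D a b c t1 \<rho>" using key[of \<rho>] H by blast
    have r0: "\<rho> 0 = 1" using P1 unfolding pseudo_cosine_for_def by simp
    have E1: "\<sigma> 1 * \<rho> 1 - 1 = \<epsilon> * (\<rho> 1 - \<sigma> 1)" "\<sigma> 1 * \<rho> 1 - 1 = \<epsilon>' * (\<rho> 1 - \<sigma> 1)"
      using A D2 s0 r0 unfolding auxiliary_parameter_def by (auto dest: spec[of _ 1])
    have "\<rho> 1 \<noteq> \<sigma> 1"
    proof
      assume eqs: "\<rho> 1 = \<sigma> 1"
      hence "\<sigma> 1 * \<sigma> 1 = 1" using E1(1) by simp
      hence "\<sigma> 1 = -1" using s1 by (metis mult_cancel_left1 square_eq_1_iff)
      thus False using key[of \<rho>] H eqs by auto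
    qed
    thus "\<epsilon> = \<epsilon>'" using E1 by simp
  qed
qed

end
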